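(* Let $A\in\mathcal{C}^{n\times n}$ be a diagonalizable matrix with at most finite entries, and let $\mathbf v\in\mathcal{C}^n$ be an eigenvector of $A$ with at most finite entries, $A\mathbf v=\nu\mathbf v$, such that $\|\mathbf v\|_2[0]>0$. Let $(\mathbf u_k)_k\subset\mathcal{C}^n$ be vectors with at most finite entries such that each coordinate sequence $(\mathbf u_k^i)_k$ is regular and $\mathbf u_k\xrightarrow{wk}\mathbf v$ coordinatewise. Then $$\frac{\mathbf u_k^*A\mathbf u_k}{\|\mathbf u_k\|_2^2}\xrightarrow{wk}\nu,$$ where $\mathbf u_k^*=(\overline{\mathbf u_k^1},\dots,\overline{\mathbf u_k^n})$.
   Context: The Levi-Civita field $\mathcal{R}$ (resp. $\mathcal{C}$) is the set of functions $a:\mathbb Q\to\mathbb R$ (resp. $\mathbb C$) with left-finite support (for every $r\in\mathbb Q$ only finitely many $q<r$ with $a(q)\ne0$), written $a[q]:=a(q)$; addition is pointwise, multiplication is $(ab)[q]=\sum_{q_1+q_2=q}a[q_1]b[q_2]$; $\mathcal{R}$ is a real closed ordered field ($a\succ b$ iff $(a-b)[\lambda(a-b)]>0$) and $\mathcal{C}=\mathcal{R}(i)$ is algebraically closed. $\operatorname{supp}(a)=\{q:a[q]\ne0\}$, $\lambda(a)=\min\operatorname{supp}(a)$ ($\lambda(0)=+\infty$); $a$ is at most finite if $\lambda(a)\ge0$. For $z=a+ib\in\mathcal{C}$ ($a,b\in\mathcal{R}$), $\bar z=a-ib$ and $|z|=\sqrt{a^2+b^2}$. For $r\in\mathbb Q$,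 $\|a\|_r:=\sup_{q\le r}|a[q]|\in\mathbb R$. Weak convergence $a_n\xrightarrow{wk}a$: for every real $r>0$ there is $N_0$ with $\|a_n-a\|_{1/r}<r$ for all $n>N_0$. A sequence is regular if the union of supports of its terms is left-finite. $\|\mathbf x\|_2=\sqrt{|\mathbf x^1|^2+\dots+|\mathbf x^n|^2}$. *)

theory Defs
  imports Complex_Main
begin

definition left_finite :: "(rat \<Rightarrow> complex) \<Rightarrow> bool" where
  "left_finite a \<longleftrightarrow> (\<forall>r. finite {q. q < r \<and> a q \<noteq> 0})"

typedef lc = "{a :: rat \<Rightarrow> complex. left_finite a}"
  by (rule exI[of _ "\<lambda>_. 0"]) (simp add: left_finite_def)

definition coeff :: "lc \<Rightarrow> rat \<Rightarrow> complex" where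
  "coeff x q = Rep_lc x q"

instantiation lc :: "{zero, one, plus, uminus, minus, times, inverse}"
begin

definition zero_lc_def: "0 = Abs_lc (\<lambda>_. 0)"
definition one_lc_def: "1 = Abs_lc (\<lambda>q. if q = 0 then 1 else 0)"
definition plus_lc_def: "x + y = Abs_lc (\<lambda>q. Rep_lc x q + Rep_lc y q)"
definition uminus_lc_def: "- x = Abs_lc (\<lambda>q. - Rep_lc x q)"
definition minus_lc_def: "x - y = Abs_lc (\<lambda>q. Rep_lc x q - Rep_lc y q)"
text \<open>Cauchy product: (ab)[q] = sum over q1+q2=q of a[q1] b[q2]; the index set is
  finite because supports are left-finite.\<close>
definition times_lc_def: "x * y = Abs_lc (\<lambda>q.
   (\<Sum>q1\<in>{q1. Rep_lc x q1 \<noteq> 0 \<and> Rep_lc y (q - q1) \<noteq> 0}. Rep_lc x q1 * Rep_lc y (q - q1)))"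
definition inverse_lc_def: "inverse x = (if x = 0 then 0 else (THE y. x * y = (1::lc)))"

instance ..
end

definition lc_div :: "lc \<Rightarrow> lc \<Rightarrow> lc" where
  "lc_div x y = x * inverse y"

definition lc_cnj :: "lc \<Rightarrow> lc" where
  "lc_cnj x = Abs_lc (\<lambda>q. cnj (Rep_lc x q))"

definition lc_real :: "lc \<Rightarrow> bool" where
  "lc_real x \<longleftrightarrow> (\<forall>q. Im (coeff x q) = 0)"

definition lc_nonneg :: "lc \<Rightarrow> bool" where
  "lc_nonneg x \<longleftrightarrow> lc_real x \<and>
     (x = 0 \<or> (\<exists>q. coeff x q \<noteq> 0 \<and> (\<forall>p<q. coeff x p = 0) \<and> Re (coeff x q) > 0))"

definition lc_sqrt :: "lc \<Rightarrow> lc" where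
  "lc_sqrt x = (THE y. lc_nonneg y \<and> y * y = x)"

text \<open>At most finite: lambda(a) >= 0.\<close>
definition at_most_finite :: "lc \<Rightarrow> bool" where
  "at_most_finite x \<longleftrightarrow> (\<forall>q<0. coeff x q = 0)"

definition lc_sum :: "nat \<Rightarrow> (nat \<Rightarrow> lc) \<Rightarrow> lc" where
  "lc_sum n f = foldr (+) (map f [0..<n]) 0"

definition lc_abs :: "lc \<Rightarrow> lc" where
  "lc_abs z = lc_sqrt (z * lc_cnj z)"

text \<open>Euclidean norm of a vector in \<C>^n (vectors: nat => lc, indices < n).\<close>
definition lc_norm2 :: "nat \<Rightarrow> (nat \<Rightarrow> lc) \<Rightarrow> lc" where
  "lc_norm2 n x = lc_sqrt (lc_sum n (\<lambda>i. lc_abs (x i) * lc_abs (x i)))"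

text \<open>Seminorm ||a||_r = sup_{q <= r} |a[q]| (r real, so that 1/r is allowed).\<close>
definition lc_snorm :: "real \<Rightarrow> lc \<Rightarrow> real" where
  "lc_snorm r x = Sup {cmod (coeff x q) | q. of_rat q \<le> r}"

definition weak_conv :: "(nat \<Rightarrow> lc) \<Rightarrow> lc \<Rightarrow> bool" where
  "weak_conv s l \<longleftrightarrow>
     (\<forall>r::real. r > 0 \<longrightarrow> (\<exists>N0. \<forall>k>N0. lc_snorm (1 / r) (s k - l) < r))"

definition regular :: "(nat \<Rightarrow> lc) \<Rightarrow> bool" where
  "regular s \<longleftrightarrow> (\<forall>r. finite {q. q < r \<and> (\<exists>k. coeff (s k) q \<noteq> 0)})"

definition mat_mult :: "nat \<Rightarrow> (nat \<Rightarrow> nat \<Rightarrow> lc) \<Rightarrow> (nat \<Rightarrow> nat \<Rightarrow> lc) \<Rightarrow> nat \<Rightarrow> nat \<Rightarrow> lc" where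
  "mat_mult n A B = (\<lambda>i j. lc_sum n (\<lambda>k. A i k * B k j))"

definition mat_vec :: "nat \<Rightarrow> (nat \<Rightarrow> nat \<Rightarrow> lc) \<Rightarrow> (nat \<Rightarrow> lc) \<Rightarrow> nat \<Rightarrow> lc" where
  "mat_vec n A x = (\<lambda>i. lc_sum n (\<lambda>j. A i j * x j))"

definition mat_id :: "nat \<Rightarrow> nat \<Rightarrow> lc" where
  "mat_id = (\<lambda>i j. if i = j then 1 else 0)"

definition diagonalizable :: "nat \<Rightarrow> (nat \<Rightarrow> nat \<Rightarrow> lc) \<Rightarrow> bool" where
  "diagonalizable n A \<longleftrightarrow>
    (\<exists>P Q d. (\<forall>i<n. \<forall>j<n. mat_mult n P Q i j = mat_id i j)
           \<and> (\<forall>i<n. \<forall>j<n. mat_mult n Q P i j = mat_id i j)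
           \<and> (\<forall>i<n. \<forall>j<n. A i j = mat_mult n (mat_mult n P (\<lambda>a b. if a = b then d a else 0)) Q i j))"

definition quad_form :: "nat \<Rightarrow> (nat \<Rightarrow> nat \<Rightarrow> lc) \<Rightarrow> (nat \<Rightarrow> lc) \<Rightarrow> lc" where
  "quad_form n A u = lc_sum n (\<lambda>i. lc_cnj (u i) * mat_vec n A u i)"

end

theory Submission
  imports Defs "HOL-Library.Groups_Big_Fun" "HOL-Computational_Algebra.Formal_Power_Series"
begin

lemma lf_Rep: "left_finite (Rep_lc x)"
  using Rep_lc by simp

lemma coeff_Abs: "left_finite f \<Longrightarrow> coeff (Abs_lc f) = f"
  unfolding coeff_def by (simp add: Abs_lc_inverse)

lemma lc_eqI: "(\<And>q. coeff x q = coeff y q) \<Longrightarrow> x = y"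
  unfolding coeff_def by (metis Rep_lc_inject ext)

lemma lf_coeff: "left_finite (coeff x)"
  unfolding coeff_def by (rule lf_Rep)

definition lfs :: "rat set \<Rightarrow> bool" where
  "lfs S \<longleftrightarrow> (\<forall>r. finite {q\<in>S. q < r})"

definition supp :: "lc \<Rightarrow> rat set" where
  "supp x = {q. coeff x q \<noteq> 0}"

lemma lfs_supp: "lfs (supp x)"
  using lf_coeff[of x] unfolding lfs_def left_finite_def supp_def by (simp add: conj_commute)

lemma lfs_fun: "left_finite f \<longleftrightarrow> lfs {q. f q \<noteq> 0}"
  unfolding lfs_def left_finite_def by (simp add: conj_commute)

lemma lfs_subset: "lfs T \<Longrightarrow> S \<subseteq> T \<Longrightarrow> lfs S"
  unfolding lfs_def proof (intro allI)
  fix r assume "\<forall>r. finite {q \<in> T. q < r}" "S \<subseteq> T"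
  then have "finite {q \<in> T. q < r}" by blast
  moreover have "{q \<in> S. q < r} \<subseteq> {q \<in> T. q < r}" using \<open>S \<subseteq> T\<close> by blast
  ultimately show "finite {q \<in> S. q < r}" by (rule finite_subset[rotated])
qed

lemma lfs_Un: "lfs S \<Longrightarrow> lfs T \<Longrightarrow> lfs (S \<union> T)"
  unfolding lfs_def proof (intro allI)
  fix r assume "\<forall>r. finite {q \<in> S. q < r}" "\<forall>r. finite {q \<in> T. q < r}"
  then have "finite ({q \<in> S. q < r} \<union> {q \<in> T. q < r})" by blast
  moreover have "{q \<in> S \<union> T. q < r} = {q \<in> S. q < r} \<union> {q \<in> T. q < r}" by blast
  ultimately show "finite {q \<in> S \<union> T. q < r}" by simp
qed

lemma lfs_finite: "finite S \<Longrightarrow> lfs S"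
  unfolding lfs_def by auto

lemma lfs_bdd: assumes "lfs S" shows "\<exists>b. \<forall>q\<in>S. b \<le> q"
proof (cases "S = {}")
  case True then show ?thesis by auto
next
  case False
  then obtain q0 where q0: "q0 \<in> S" by auto
  let ?F = "{q\<in>S. q < q0 + 1}"
  have fin: "finite ?F" using assms unfolding lfs_def by auto
  have ne: "q0 \<in> ?F" using q0 by auto
  show ?thesis
  proof (intro exI ballI)
    fix q assume "q \<in> S"
    show "Min ?F \<le> q"
    proof (cases "q < q0 + 1")
      case True then show ?thesis using fin \<open>q\<in>S\<close> by (intro Min_le) auto
    next
      case False
      have "Min ?F \<le> q0" using fin ne by (intro Min_le) auto
      then show ?thesis using False by simp
    qed
  qed
qed

definition sumset :: "rat set \<Rightarrow> rat set \<Rightarrow> rat set" where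
  "sumset S T = {a + b | a b. a \<in> S \<and> b \<in> T}"

lemma lfs_sumset: assumes S: "lfs S" and T: "lfs T" shows "lfs (sumset S T)"
proof -
  obtain bS where bS: "\<forall>q\<in>S. bS \<le> q" using lfs_bdd[OF S] by auto
  obtain bT where bT: "\<forall>q\<in>T. bT \<le> q" using lfs_bdd[OF T] by auto
  show ?thesis unfolding lfs_def
  proof
    fix r
    have "{q\<in>sumset S T. q < r} \<subseteq> (\<lambda>(a,b). a + b) ` ({a\<in>S. a < r - bT} \<times> {b\<in>T. b < r - bS})"
    proof
      fix q assume "q \<in> {q\<in>sumset S T. q < r}"
      then obtain a b where "a \<in> S" "b \<in> T" "q = a + b" "q < r" unfolding sumset_def by auto
      moreover have "bS \<le> a" "bT \<le> b" using bS bT calculation by auto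
      ultimately show "q \<in> (\<lambda>(a,b). a + b) ` ({a\<in>S. a < r - bT} \<times> {b\<in>T. b < r - bS})"
        by (intro image_eqI[of _ _ "(a,b)"]) auto
    qed
    moreover have "finite ({a\<in>S. a < r - bT} \<times> {b\<in>T. b < r - bS})"
      using S T unfolding lfs_def by auto
    ultimately show "finite {q\<in>sumset S T. q < r}" by (meson finite_imageI finite_subset)
  qed
qed

lemma lf_bdd: "left_finite f \<Longrightarrow> \<exists>b. \<forall>q<b. f q = 0"
proof -
  assume "left_finite f"
  then obtain b where "\<forall>q\<in>{q. f q \<noteq> 0}. b \<le> q" using lfs_bdd lfs_fun by blast
  then have "\<forall>q<b. f q = 0" by (auto simp: not_le[symmetric])
  then show ?thesis by blast
qed

lemma conv_fin:
  assumes f: "left_finite f" and g: "left_finite g"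
  shows "finite {q1. f q1 * g (q - q1) \<noteq> 0}"
proof -
  obtain b where b: "\<forall>p<b. g p = 0" using lf_bdd[OF g] by auto
  have "{q1. f q1 * g (q - q1) \<noteq> 0} \<subseteq> {q1. q1 < q - b + 1 \<and> f q1 \<noteq> 0}"
  proof
    fix q1 assume "q1 \<in> {q1. f q1 * g (q - q1) \<noteq> 0}"
    then have "f q1 \<noteq> 0" "g (q - q1) \<noteq> 0" by auto
    then have "\<not> q - q1 < b" using b by blast
    then have "q1 < q - b + 1" by linarith
    then show "q1 \<in> {q1. q1 < q - b + 1 \<and> f q1 \<noteq> 0}" using \<open>f q1 \<noteq> 0\<close> by blast
  qed
  moreover have "finite {q1. q1 < q - b + 1 \<and> f q1 \<noteq> 0}" using f unfolding left_finite_def by auto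
  ultimately show ?thesis by (rule finite_subset)
qed

lemma conv_lf:
  assumes f: "left_finite f" and g: "left_finite g"
  shows "left_finite (\<lambda>q. Sum_any (\<lambda>q1. f q1 * g (q - q1)))"
proof -
  let ?h = "\<lambda>q. Sum_any (\<lambda>q1. f q1 * g (q - q1))"
  have "{q. ?h q \<noteq> 0} \<subseteq> sumset {q. f q \<noteq> 0} {q. g q \<noteq> 0}"
  proof
    fix q assume "q \<in> {q. ?h q \<noteq> 0}"
    then have "?h q \<noteq> 0" by simp
    have "\<exists>q1. f q1 * g (q - q1) \<noteq> 0"
    proof (rule ccontr)
      assume "\<not> (\<exists>q1. f q1 * g (q - q1) \<noteq> 0)"
      then have "(\<lambda>q1. f q1 * g (q - q1)) = (\<lambda>_. 0)" by auto
      then have "?h q = 0" by (metis Sum_any.neutral)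
      then show False using \<open>?h q \<noteq> 0\<close> by simp
    qed
    then obtain q1 where "f q1 * g (q - q1) \<noteq> 0" by blast
    then have "f q1 \<noteq> 0" "g (q - q1) \<noteq> 0" by auto
    moreover have "q = q1 + (q - q1)" by simp
    ultimately show "q \<in> sumset {q. f q \<noteq> 0} {q. g q \<noteq> 0}" unfolding sumset_def
      by blast
  qed
  moreover have "lfs (sumset {q. f q \<noteq> 0} {q. g q \<noteq> 0})"
    using f g unfolding lfs_fun by (rule lfs_sumset)
  ultimately show ?thesis unfolding lfs_fun by (rule lfs_subset[rotated])
qed

lemma coeff_times: "coeff (x * y) q = (Sum_any (\<lambda>q1. coeff x q1 * coeff y (q - q1)))"
proof -
  have e: "(\<lambda>q. (\<Sum>q1\<in>{q1. Rep_lc x q1 \<noteq> 0 \<and> Rep_lc y (q - q1) \<noteq> 0}. Rep_lc x q1 * Rep_lc y (q - q1)))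
     = (\<lambda>q. Sum_any (\<lambda>q1. coeff x q1 * coeff y (q - q1)))"
  proof
    fix q
    show "(\<Sum>q1\<in>{q1. Rep_lc x q1 \<noteq> 0 \<and> Rep_lc y (q - q1) \<noteq> 0}. Rep_lc x q1 * Rep_lc y (q - q1))
      = (Sum_any (\<lambda>q1. coeff x q1 * coeff y (q - q1)))"
      unfolding coeff_def
      by (rule Sum_any.expand_superset[symmetric]) (use conv_fin[OF lf_Rep lf_Rep, of x y q] in auto)
  qed
  show ?thesis unfolding times_lc_def e
    by (subst coeff_Abs) (auto intro: conv_lf lf_coeff)
qed


lemma lf_zero: "left_finite (\<lambda>_. 0)" unfolding left_finite_def by simp
lemma lf_one: "left_finite (\<lambda>q. if q = 0 then c else 0)"
proof -
  have "\<And>r. {q. q < r \<and> (if q = 0 then c else 0) \<noteq> 0} \<subseteq> {0}" by auto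
  then show ?thesis unfolding left_finite_def by (metis finite.emptyI finite_insert finite_subset)
qed
lemma lf_add: "left_finite f \<Longrightarrow> left_finite g \<Longrightarrow> left_finite (\<lambda>q. f q + g q)"
  unfolding lfs_fun by (rule lfs_subset[OF lfs_Un[of "{q. f q \<noteq> 0}" "{q. g q \<noteq> 0}"]]) auto
lemma lf_diff: "left_finite f \<Longrightarrow> left_finite g \<Longrightarrow> left_finite (\<lambda>q. f q - g q)"
  unfolding lfs_fun by (rule lfs_subset[OF lfs_Un[of "{q. f q \<noteq> 0}" "{q. g q \<noteq> 0}"]]) auto
lemma lf_uminus: "left_finite f \<Longrightarrow> left_finite (\<lambda>q. - f q)"
  unfolding lfs_fun by simp
lemma lf_cnj: "left_finite f \<Longrightarrow> left_finite (\<lambda>q. cnj (f q))"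
  unfolding lfs_fun by simp
lemma lf_scale: "left_finite f \<Longrightarrow> left_finite (\<lambda>q. c * f q)"
  unfolding lfs_fun by (rule lfs_subset) auto

lemma coeff_zero[simp]: "coeff 0 q = 0"
  unfolding zero_lc_def by (simp add: coeff_Abs lf_zero)
lemma coeff_one: "coeff 1 q = (if q = 0 then 1 else 0)"
  unfolding one_lc_def by (simp add: coeff_Abs lf_one)
lemma coeff_add[simp]: "coeff (x + y) q = coeff x q + coeff y q"
  unfolding plus_lc_def by (simp add: coeff_Abs lf_add lf_Rep coeff_def)
lemma coeff_diff[simp]: "coeff (x - y) q = coeff x q - coeff y q"
  unfolding minus_lc_def by (simp add: coeff_Abs lf_diff lf_Rep coeff_def)
lemma coeff_uminus[simp]: "coeff (- x) q = - coeff x q"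
  unfolding uminus_lc_def by (simp add: coeff_Abs lf_uminus lf_Rep coeff_def)
lemma coeff_cnj[simp]: "coeff (lc_cnj x) q = cnj (coeff x q)"
  unfolding lc_cnj_def by (simp add: coeff_Abs lf_cnj lf_Rep coeff_def)

lemma fin_prod: "finite {a. coeff x a * coeff y (q - a) \<noteq> 0}"
  by (rule conv_fin[OF lf_coeff lf_coeff])

lemma lc_mult_commute: "x * y = y * (x::lc)"
proof (rule lc_eqI)
  fix q
  have "bij (\<lambda>b::rat. q - b)" by (rule o_bij[of "\<lambda>b. q - b"]) (auto simp: fun_eq_iff)
  then have "Sum_any (\<lambda>a. coeff x a * coeff y (q - a)) = Sum_any (\<lambda>b. coeff y b * coeff x (q - b))"
    by (rule Sum_any.reindex_cong) (auto simp: fun_eq_iff mult.commute)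
  then show "coeff (x * y) q = coeff (y * x) q" by (simp add: coeff_times)
qed

lemma lc_distrib: "(x + y) * z = x * z + y * (z::lc)"
proof (rule lc_eqI)
  fix q
  have "Sum_any (\<lambda>a. (coeff x a + coeff y a) * coeff z (q - a)) =
     Sum_any (\<lambda>a. coeff x a * coeff z (q - a) + coeff y a * coeff z (q - a))"
    by (simp add: distrib_right)
  also have "\<dots> = Sum_any (\<lambda>a. coeff x a * coeff z (q - a)) + Sum_any (\<lambda>a. coeff y a * coeff z (q - a))"
    by (rule Sum_any.distrib) (rule fin_prod)+
  finally show "coeff ((x + y) * z) q = coeff (x * z + y * z) q" by (simp add: coeff_times)
qed

lemma lc_one_mult: "1 * x = (x::lc)"
proof (rule lc_eqI)
  fix q
  have "Sum_any (\<lambda>a. coeff 1 a * coeff x (q - a)) = Sum_any (\<lambda>a. if a = 0 then coeff x (q - a) else 0)"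
    by (rule Sum_any.cong) (simp add: coeff_one)
  also have "\<dots> = coeff x q" by (rule trans[OF Sum_any.delta]) simp
  finally show "coeff (1 * x) q = coeff x q" by (simp add: coeff_times)
qed

lemma lc_mult_assoc: "(x * y) * z = x * (y * (z::lc))"
proof (rule lc_eqI)
  fix q
  let ?X = "coeff x" and ?Y = "coeff y" and ?Z = "coeff z"
  obtain bx where bx: "\<forall>p<bx. ?X p = 0" using lf_bdd[OF lf_coeff] by blast
  obtain byy where byy: "\<forall>p<byy. ?Y p = 0" using lf_bdd[OF lf_coeff] by blast
  obtain bz where bz: "\<forall>p<bz. ?Z p = 0" using lf_bdd[OF lf_coeff] by blast
  define g where "g = (\<lambda>p a. ?X a * ?Y (p - a) * ?Z (q - p))"
  have "coeff ((x * y) * z) q = Sum_any (\<lambda>p. Sum_any (\<lambda>a. ?X a * ?Y (p - a)) * ?Z (q - p))"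
    by (simp add: coeff_times)
  also have "\<dots> = Sum_any (\<lambda>p. Sum_any (g p))"
    unfolding g_def by (subst Sum_any_left_distrib[OF fin_prod]) (rule refl)
  also have "\<dots> = Sum_any (\<lambda>a. Sum_any (\<lambda>p. g p a))"
  proof (rule Sum_any.swap)
    let ?A = "{p \<in> sumset (supp x) (supp y). p < q - bz + 1}"
    let ?B = "{a \<in> supp x. a < q - byy - bz + 1}"
    show "finite (?A \<times> ?B)"
      using lfs_sumset[OF lfs_supp lfs_supp, of x y] lfs_supp[of x] unfolding lfs_def by blast
    show "{a. \<exists>b. g a b \<noteq> 0} \<times> {b. \<exists>a. g a b \<noteq> 0} \<subseteq> ?A \<times> ?B"
    proof
      fix c assume "c \<in> {a. \<exists>b. g a b \<noteq> 0} \<times> {b. \<exists>a. g a b \<noteq> 0}"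
      then obtain p a where c: "c = (p, a)" and "\<exists>b. g p b \<noteq> 0" and "\<exists>p'. g p' a \<noteq> 0" by auto
      then obtain b p' where gb: "g p b \<noteq> 0" and gp: "g p' a \<noteq> 0" by auto
      from gb have 1: "?X b \<noteq> 0" "?Y (p - b) \<noteq> 0" "?Z (q - p) \<noteq> 0" unfolding g_def by auto
      from gp have 2: "?X a \<noteq> 0" "?Y (p' - a) \<noteq> 0" "?Z (q - p') \<noteq> 0" unfolding g_def by auto
      have "p = b + (p - b)" by simp
      then have "p \<in> sumset (supp x) (supp y)" using 1 unfolding sumset_def supp_def by blast
      moreover have "\<not> q - p < bz" using 1 bz by blast
      moreover have "\<not> q - p' < bz" "\<not> p' - a < byy" using 2 bz byy by blast+
      ultimately show "c \<in> ?A \<times> ?B" using c 2 unfolding supp_def by auto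
    qed
  qed
  also have "\<dots> = Sum_any (\<lambda>a. ?X a * Sum_any (\<lambda>b. ?Y b * ?Z (q - a - b)))"
  proof (rule Sum_any.cong)
    fix a
    have "bij (\<lambda>b::rat. b + a)" by (rule o_bij[of "\<lambda>b. b - a"]) (auto simp: fun_eq_iff)
    then have "Sum_any (\<lambda>p. g p a) = Sum_any (\<lambda>b. ?X a * (?Y b * ?Z (q - a - b)))"
      by (rule Sum_any.reindex_cong) (auto simp: fun_eq_iff g_def algebra_simps)
    also have "\<dots> = ?X a * Sum_any (\<lambda>b. ?Y b * ?Z (q - a - b))"
      by (subst Sum_any_right_distrib[OF fin_prod]) (rule refl)
    finally show "Sum_any (\<lambda>p. g p a) = ?X a * Sum_any (\<lambda>b. ?Y b * ?Z (q - a - b))" .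
  qed
  also have "\<dots> = coeff (x * (y * z)) q" by (simp add: coeff_times)
  finally show "coeff ((x * y) * z) q = coeff (x * (y * z)) q" .
qed

instance lc :: comm_ring_1
proof
  fix a b c :: lc
  show "a * b * c = a * (b * c)" by (rule lc_mult_assoc)
  show "a * b = b * a" by (rule lc_mult_commute)
  show "1 * a = a" by (rule lc_one_mult)
  show "a + b + c = a + (b + c)" by (rule lc_eqI) (simp add: add.assoc)
  show "a + b = b + a" by (rule lc_eqI) (simp add: add.commute)
  show "0 + a = a" by (rule lc_eqI) simp
  show "- a + a = 0" by (rule lc_eqI) simp
  show "a - b = a + - b" by (rule lc_eqI) simp
  show "(a + b) * c = a * c + b * c" by (rule lc_distrib)
  show "(0::lc) \<noteq> 1"
  proof
    assume "(0::lc) = 1"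
    then have "coeff (0::lc) 0 = coeff 1 0" by simp
    then show False by (simp add: coeff_one)
  qed
qed


definition cst :: "complex \<Rightarrow> lc" where
  "cst c = Abs_lc (\<lambda>q. if q = 0 then c else 0)"

lemma coeff_cst: "coeff (cst c) q = (if q = 0 then c else 0)"
  unfolding cst_def by (simp add: coeff_Abs lf_one)

lemma coeff_cst_mult[simp]: "coeff (cst c * x) q = c * coeff x q"
proof -
  have "Sum_any (\<lambda>a. coeff (cst c) a * coeff x (q - a)) = Sum_any (\<lambda>a. if a = 0 then c * coeff x (q - a) else 0)"
    by (rule Sum_any.cong) (simp add: coeff_cst)
  also have "\<dots> = c * coeff x q" by (rule trans[OF Sum_any.delta]) simp
  finally show ?thesis by (simp add: coeff_times)
qed

lemma cst_mult: "cst (a * b) = cst a * cst b"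
  by (rule lc_eqI) (simp add: coeff_cst)
lemma cst_one[simp]: "cst 1 = 1"
  by (rule lc_eqI) (simp add: coeff_cst coeff_one)
lemma cst_zero[simp]: "cst 0 = 0"
  by (rule lc_eqI) (simp add: coeff_cst)
lemma cst_add: "cst (a + b) = cst a + cst b"
  by (rule lc_eqI) (simp add: coeff_cst)

lemma Sum_any_cnj: "cnj (Sum_any g) = Sum_any (\<lambda>a. cnj (g a))"
  unfolding Sum_any.expand_set by (simp add: cnj_sum)

lemma cnj_mult: "lc_cnj (x * y) = lc_cnj x * lc_cnj y"
  by (rule lc_eqI) (simp add: coeff_times Sum_any_cnj)

lemma cnj_one[simp]: "lc_cnj 1 = 1" by (rule lc_eqI) (simp add: coeff_one)
lemma cnj_add: "lc_cnj (x + y) = lc_cnj x + lc_cnj y" by (rule lc_eqI) simp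
lemma cnj_cnj[simp]: "lc_cnj (lc_cnj x) = x" by (rule lc_eqI) simp
lemma cnj_zero[simp]: "lc_cnj 0 = 0" by (rule lc_eqI) simp

lemma lc_sum_eq: "lc_sum n f = (\<Sum>i<n. f i)"
proof -
  have "foldr (+) (map f [m..<m+k]) 0 = (\<Sum>i\<in>{m..<m+k}. f i)" for m k
  proof (induction k arbitrary: m)
    case 0 then show ?case by simp
  next
    case (Suc k)
    have "[m..<m + Suc k] = m # [Suc m..<Suc m + k]" by (simp add: upt_rec)
    moreover have "{m..<m + Suc k} = insert m {Suc m..<Suc m + k}" by auto
    ultimately show ?case using Suc[of "Suc m"] by simp
  qed
  from this[of 0 n] show ?thesis unfolding lc_sum_def by (simp add: atLeast0LessThan)
qed

lemma coeff_sum: "coeff (\<Sum>i\<in>I. f i) q = (\<Sum>i\<in>I. coeff (f i) q)"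
  by (induction I rule: infinite_finite_induct) auto

definition vb :: "lc \<Rightarrow> rat \<Rightarrow> bool" where
  "vb x b \<longleftrightarrow> (\<forall>q<b. coeff x q = 0)"

lemma vb_mono: "vb x b \<Longrightarrow> a \<le> b \<Longrightarrow> vb x a"
  unfolding vb_def by auto

lemma vb_mult:
  assumes "vb x a" "vb y b" shows "vb (x * y) (a + b)"
  unfolding vb_def
proof (intro allI impI)
  fix q assume q: "q < a + b"
  have "(\<lambda>c. coeff x c * coeff y (q - c)) = (\<lambda>_. 0)"
  proof
    fix c
    show "coeff x c * coeff y (q - c) = 0"
    proof (cases "c < a")
      case True then show ?thesis using assms(1) unfolding vb_def by simp
    next
      case False then have "q - c < b" using q by linarith
      then show ?thesis using assms(2) unfolding vb_def by simp
    qed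
  qed
  then show "coeff (x * y) q = 0" unfolding coeff_times by (metis Sum_any.neutral)
qed

lemma coeff_mult_lead:
  assumes "vb x a" "vb y b" shows "coeff (x * y) (a + b) = coeff x a * coeff y b"
proof -
  have "Sum_any (\<lambda>c. coeff x c * coeff y (a + b - c)) = sum (\<lambda>c. coeff x c * coeff y (a + b - c)) {a}"
  proof (rule Sum_any.expand_superset)
    show "{c. coeff x c * coeff y (a + b - c) \<noteq> 0} \<subseteq> {a}"
    proof
      fix c assume "c \<in> {c. coeff x c * coeff y (a + b - c) \<noteq> 0}"
      then have "coeff x c \<noteq> 0" "coeff y (a + b - c) \<noteq> 0" by auto
      then have "\<not> c < a" "\<not> a + b - c < b" using assms unfolding vb_def by blast+
      then show "c \<in> {a}" by simp
    qed
  qed simp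
  then show ?thesis by (simp add: coeff_times)
qed

lemma vb_one: "vb 1 0" unfolding vb_def by (simp add: coeff_one)

lemma vb_power: "vb e m \<Longrightarrow> vb (e ^ j) (of_nat j * m)"
proof (induction j)
  case 0 then show ?case by (simp add: vb_one)
next
  case (Suc j)
  have "vb (e * e ^ j) (m + of_nat j * m)" by (rule vb_mult) (use Suc in auto)
  then show ?case by (simp add: algebra_simps)
qed

lemma vb_add: "vb x a \<Longrightarrow> vb y a \<Longrightarrow> vb (x + y) a" unfolding vb_def by simp
lemma vb_diff: "vb x a \<Longrightarrow> vb y a \<Longrightarrow> vb (x - y) a" unfolding vb_def by simp
lemma vb_sum: "(\<And>i. i \<in> I \<Longrightarrow> vb (f i) a) \<Longrightarrow> vb (\<Sum>i\<in>I. f i) a"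
  unfolding vb_def by (simp add: coeff_sum)
lemma vb_cst: "vb (cst c) 0" unfolding vb_def by (simp add: coeff_cst)
lemma vb_cst_mult: "vb x a \<Longrightarrow> vb (cst c * x) a" unfolding vb_def by simp
lemma vb_cnj: "vb x a \<Longrightarrow> vb (lc_cnj x) a" unfolding vb_def by simp
lemma vb_zero: "vb 0 a" unfolding vb_def by simp

lemma agree_mult:
  assumes a: "vb a 0" and ag: "\<forall>s\<le>t. coeff y s = coeff y' s"
  shows "coeff (a * y) t = coeff (a * y') t"
proof -
  have "(\<lambda>c. coeff a c * coeff y (t - c)) = (\<lambda>c. coeff a c * coeff y' (t - c))"
  proof
    fix c show "coeff a c * coeff y (t - c) = coeff a c * coeff y' (t - c)"
    proof (cases "c < 0")
      case True then show ?thesis using a unfolding vb_def by simp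
    next
      case False then have "t - c \<le> t" by simp
      then show ?thesis using ag by simp
    qed
  qed
  then show ?thesis unfolding coeff_times by (rule arg_cong)
qed

lemma lead_exists:
  assumes "x \<noteq> 0" shows "\<exists>l. coeff x l \<noteq> 0 \<and> vb x l"
proof -
  obtain q0 where q0: "coeff x q0 \<noteq> 0" using assms lc_eqI[of x 0] by auto
  let ?F = "{q. q < q0 + 1 \<and> coeff x q \<noteq> 0}"
  have fin: "finite ?F" using lf_coeff[of x] unfolding left_finite_def by blast
  have ne: "q0 \<in> ?F" using q0 by simp
  let ?l = "Min ?F"
  have "?l \<in> ?F" by (rule Min_in[OF fin]) (use ne in blast)
  moreover have "vb x ?l" unfolding vb_def
  proof (intro allI impI)
    fix p assume p: "p < ?l"
    show "coeff x p = 0"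
    proof (rule ccontr)
      assume "coeff x p \<noteq> 0"
      moreover have "?l \<le> q0" using fin ne by (intro Min_le) auto
      ultimately have "p \<in> ?F" using p by auto
      then have "?l \<le> p" using fin by (intro Min_le) auto
      then show False using p by simp
    qed
  qed
  ultimately show ?thesis by blast
qed

instance lc :: idom
proof
  fix a b :: lc
  assume "a \<noteq> 0" "b \<noteq> 0"
  then obtain la lb where "coeff a la \<noteq> 0" "vb a la" "coeff b lb \<noteq> 0" "vb b lb"
    using lead_exists by blast
  then have "coeff (a * b) (la + lb) \<noteq> 0" by (simp add: coeff_mult_lead)
  then show "a * b \<noteq> 0" by auto
qed


definition Nt :: "rat \<Rightarrow> rat \<Rightarrow> nat" where
  "Nt m t = nat \<lfloor>t / m\<rfloor> + 1"

definition ser :: "(nat \<Rightarrow> complex) \<Rightarrow> lc \<Rightarrow> rat \<Rightarrow> lc" where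
  "ser f e m = Abs_lc (\<lambda>t. \<Sum>j\<le>Nt m t. f j * coeff (e ^ j) t)"

definition P :: "(nat \<Rightarrow> complex) \<Rightarrow> lc \<Rightarrow> nat \<Rightarrow> lc" where
  "P f e N = (\<Sum>j\<le>N. cst (f j) * e ^ j)"

lemma Nt_mono: "m > 0 \<Longrightarrow> s \<le> t \<Longrightarrow> Nt m s \<le> Nt m t"
  unfolding Nt_def by (simp add: divide_right_mono floor_mono nat_mono)

lemma Nt_big: assumes m: "m > 0" and j: "j > nat \<lfloor>t / m\<rfloor>" shows "t < of_nat j * m"
proof -
  have a: "int j \<ge> \<lfloor>t / m\<rfloor> + 1" using j by linarith
  have "t / m < of_int (\<lfloor>t / m\<rfloor> + 1)" using floor_correct[of "t/m"] by simp
  also have "\<dots> \<le> of_int (int j)" using a by (simp only: of_int_le_iff)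
  finally have "t / m < of_nat j" by simp
  then show ?thesis using m by (simp add: divide_less_eq)
qed

lemma lf_ser: assumes m: "m > 0" shows "left_finite (\<lambda>t. \<Sum>j\<le>Nt m t. f j * coeff (e ^ j) t)"
  unfolding left_finite_def
proof
  fix r
  have "{t. t < r \<and> (\<Sum>j\<le>Nt m t. f j * coeff (e ^ j) t) \<noteq> 0} \<subseteq>
        (\<Union>j\<le>Nt m r. {t. t < r \<and> coeff (e ^ j) t \<noteq> 0})"
  proof
    fix t assume "t \<in> {t. t < r \<and> (\<Sum>j\<le>Nt m t. f j * coeff (e ^ j) t) \<noteq> 0}"
    then have tr: "t < r" and ne: "(\<Sum>j\<le>Nt m t. f j * coeff (e ^ j) t) \<noteq> 0" by auto
    from ne obtain j where j: "j \<le> Nt m t" "f j * coeff (e ^ j) t \<noteq> 0"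
      by (rule sum.not_neutral_contains_not_neutral) auto
    have "Nt m t \<le> Nt m r" using Nt_mono[OF m, of t r] tr by simp
    then show "t \<in> (\<Union>j\<le>Nt m r. {t. t < r \<and> coeff (e ^ j) t \<noteq> 0})" using j tr by auto
  qed
  moreover have "finite (\<Union>j\<le>Nt m r. {t. t < r \<and> coeff (e ^ j) t \<noteq> 0})"
    using lf_coeff unfolding left_finite_def by blast
  ultimately show "finite {t. t < r \<and> (\<Sum>j\<le>Nt m t. f j * coeff (e ^ j) t) \<noteq> 0}"
    by (rule finite_subset)
qed

lemma coeff_ser: "m > 0 \<Longrightarrow> coeff (ser f e m) t = (\<Sum>j\<le>Nt m t. f j * coeff (e ^ j) t)"
  unfolding ser_def by (simp add: coeff_Abs lf_ser)

lemma coeff_P: "coeff (P f e N) t = (\<Sum>j\<le>N. f j * coeff (e ^ j) t)"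
  unfolding P_def by (simp add: coeff_sum)

lemma ser_agree:
  assumes m: "m > 0" and e: "vb e m" and N: "Nt m t \<le> N"
  shows "coeff (ser f e m) t = coeff (P f e N) t"
proof -
  have "(\<Sum>j\<le>Nt m t. f j * coeff (e ^ j) t) = (\<Sum>j\<le>N. f j * coeff (e ^ j) t)"
  proof (rule sum.mono_neutral_left)
    show "finite {..N}" by simp
    show "{..Nt m t} \<subseteq> {..N}" using N by auto
    show "\<forall>i\<in>{..N} - {..Nt m t}. f i * coeff (e ^ i) t = 0"
    proof
      fix i assume "i \<in> {..N} - {..Nt m t}"
      then have "i > nat \<lfloor>t / m\<rfloor>" unfolding Nt_def by auto
      then have "t < of_nat i * m" by (rule Nt_big[OF m])
      then show "f i * coeff (e ^ i) t = 0" using vb_power[OF e, of i] unfolding vb_def by simp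
    qed
  qed
  then show ?thesis using m by (simp add: coeff_ser coeff_P)
qed

lemma ser_agree_le:
  assumes m: "m > 0" and e: "vb e m"
  shows "\<forall>s\<le>t. coeff (ser f e m) s = coeff (P f e (Nt m t)) s"
  using ser_agree[OF m e] Nt_mono[OF m] by blast

lemma vb_P: assumes "m \<ge> 0" "vb e m" shows "vb (P f e N) 0"
  unfolding P_def
proof (rule vb_sum)
  fix j
  have "vb (e ^ j) (of_nat j * m)" by (rule vb_power[OF assms(2)])
  then have "vb (e ^ j) 0" by (rule vb_mono) (use assms in simp)
  then show "vb (cst (f j) * e ^ j) 0" by (rule vb_cst_mult)
qed

lemma vb_ser: assumes m: "m > 0" "vb e m" shows "vb (ser f e m) 0"
  unfolding vb_def
proof (intro allI impI)
  fix q :: rat assume "q < 0"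
  have "coeff (ser f e m) q = coeff (P f e (Nt m q)) q" by (rule ser_agree[OF m]) simp
  also have "\<dots> = 0" using vb_P[of m e f "Nt m q"] m \<open>q < 0\<close> unfolding vb_def by simp
  finally show "coeff (ser f e m) q = 0" .
qed

lemma cst_uminus: "cst (- a) = - cst a" by (rule lc_eqI) (simp add: coeff_cst)
lemma cst_power: "cst (a ^ n) = cst a ^ n"
  by (induction n) (simp_all add: cst_mult)

lemma ser_inv:
  assumes m: "m > 0" and e: "vb e m"
  shows "(1 + e) * ser (\<lambda>j. (-1) ^ j) e m = 1"
proof (rule lc_eqI)
  fix t
  let ?N = "Nt m t"
  have a: "vb (1 + e) 0" using vb_add[OF vb_one vb_mono[OF e]] m by simp
  have "coeff ((1 + e) * ser (\<lambda>j. (-1) ^ j) e m) t = coeff ((1 + e) * P (\<lambda>j. (-1) ^ j) e ?N) t"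
    by (rule agree_mult[OF a ser_agree_le[OF m e]])
  also have "P (\<lambda>j. (-1) ^ j) e ?N = (\<Sum>j<Suc ?N. (- e) ^ j)"
    unfolding P_def lessThan_Suc_atMost
    by (rule sum.cong) (simp_all add: cst_power cst_uminus power_minus[of e])
  also have "(1 + e) * (\<Sum>j<Suc ?N. (- e) ^ j) = 1 - (- e) ^ Suc ?N"
    using one_diff_power_eq[of "- e" "Suc ?N"] by simp
  also have "coeff (1 - (- e) ^ Suc ?N) t = coeff 1 t"
  proof -
    have "vb ((- e) ^ Suc ?N) (of_nat (Suc ?N) * m)"
      by (rule vb_power) (use e in \<open>simp add: vb_def\<close>)
    moreover have "t < of_nat (Suc ?N) * m" by (rule Nt_big[OF m]) (simp add: Nt_def)
    ultimately show ?thesis unfolding vb_def by simp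
  qed
  finally show "coeff ((1 + e) * ser (\<lambda>j. (-1) ^ j) e m) t = coeff 1 t" .
qed

lemma cst_sum: "cst (\<Sum>i\<in>I. f i) = (\<Sum>i\<in>I. cst (f i))"
  by (induction I rule: infinite_finite_induct) (simp_all add: cst_add)

lemma one_gchoose: "(1::complex) gchoose k = (if k \<le> 1 then 1 else 0)"
proof -
  have "of_nat (1 choose k) = (of_nat 1 gchoose k :: complex)" by (rule binomial_gbinomial)
  then have "(1::complex) gchoose k = of_nat (1 choose k)" by simp
  moreover have "(1 choose k) = (if k \<le> 1 then 1 else 0)"
    by (cases k) (auto simp: binomial_eq_0)
  ultimately show ?thesis by simp
qed

lemma sum_one_gchoose:
  assumes "N \<ge> 1" shows "(\<Sum>k\<le>N. cst ((1::complex) gchoose k) * e ^ k) = 1 + e"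
  using assms
proof (induction N rule: nat_induct_at_least)
  case base
  show ?case by (simp add: one_gchoose)
next
  case (Suc n)
  then show ?case by (simp add: one_gchoose)
qed

definition hb :: "nat \<Rightarrow> complex" where "hb j = (1/2 :: complex) gchoose j"

lemma hb_vandermonde: "(\<Sum>i\<le>k. hb i * hb (k - i)) = (1::complex) gchoose k"
proof -
  have "(\<Sum>i\<in>{0..k}. hb i * hb (k - i)) = (1/2 + 1/2 :: complex) gchoose k"
    unfolding hb_def by (rule gbinomial_Vandermonde)
  then show ?thesis by (simp add: atLeast0AtMost)
qed

lemma ser_sqrt:
  assumes m: "m > 0" and e: "vb e m"
  shows "ser hb e m * ser hb e m = 1 + e"
proof (rule lc_eqI)
  fix t
  let ?N = "Nt m t"
  let ?Y = "ser hb e m"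
  let ?P = "P hb e ?N"
  have m0: "m \<ge> 0" using m by simp
  have "coeff (?Y * ?Y) t = coeff (?Y * ?P) t"
    by (rule agree_mult[OF vb_ser[OF m e] ser_agree_le[OF m e]])
  also have "\<dots> = coeff (?P * ?Y) t" by (simp add: mult.commute)
  also have "\<dots> = coeff (?P * ?P) t"
    by (rule agree_mult[OF vb_P[OF m0 e] ser_agree_le[OF m e]])
  also have "?P * ?P = (\<Sum>(i,j)\<in>{..?N} \<times> {..?N}. cst (hb i * hb j) * e ^ (i + j))"
    unfolding P_def sum_product sum.cartesian_product
    by (rule sum.cong) (auto simp: cst_mult power_add algebra_simps)
  also have "\<dots> = (\<Sum>(i,j)\<in>({..?N} \<times> {..?N}) - {(i,j). i + j \<le> ?N}. cst (hb i * hb j) * e ^ (i + j))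
       + (\<Sum>(i,j)\<in>{(i,j). i + j \<le> ?N}. cst (hb i * hb j) * e ^ (i + j))"
    by (rule sum.subset_diff) auto
  also have "(\<Sum>(i,j)\<in>{(i,j). i + j \<le> ?N}. cst (hb i * hb j) * e ^ (i + j))
     = (\<Sum>k\<le>?N. \<Sum>i\<le>k. cst (hb i * hb (k - i)) * e ^ (i + (k - i)))"
    by (rule sum.triangle_reindex_eq)
  also have "\<dots> = (\<Sum>k\<le>?N. cst ((1::complex) gchoose k) * e ^ k)"
  proof (rule sum.cong)
    fix k assume "k \<in> {..?N}"
    have "(\<Sum>i\<le>k. cst (hb i * hb (k - i)) * e ^ (i + (k - i))) = (\<Sum>i\<le>k. cst (hb i * hb (k - i)) * e ^ k)"
      by (rule sum.cong) auto
    also have "\<dots> = cst (\<Sum>i\<le>k. hb i * hb (k - i)) * e ^ k" by (simp add: cst_sum sum_distrib_right)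
    finally show "(\<Sum>i\<le>k. cst (hb i * hb (k - i)) * e ^ (i + (k - i))) = cst ((1::complex) gchoose k) * e ^ k"
      by (simp add: hb_vandermonde)
  qed simp
  also have "\<dots> = 1 + e" by (rule sum_one_gchoose) (simp add: Nt_def)
  also have "coeff ((\<Sum>(i,j)\<in>({..?N} \<times> {..?N}) - {(i,j). i + j \<le> ?N}. cst (hb i * hb j) * e ^ (i + j)) + (1 + e)) t
     = coeff (1 + e) t"
  proof -
    have "coeff (\<Sum>(i,j)\<in>({..?N} \<times> {..?N}) - {(i,j). i + j \<le> ?N}. cst (hb i * hb j) * e ^ (i + j)) t = 0"
      unfolding coeff_sum
    proof (rule sum.neutral, rule ballI)
      fix x assume x: "x \<in> ({..?N} \<times> {..?N}) - {(i,j). i + j \<le> ?N}"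
      obtain i j where xij: "x = (i, j)" by fastforce
      with x have "\<not> i + j \<le> ?N" by auto
      then have "i + j > nat \<lfloor>t / m\<rfloor>" unfolding Nt_def by simp
      then have "t < of_nat (i + j) * m" by (rule Nt_big[OF m])
      then have "coeff (cst (hb i * hb j) * e ^ (i + j)) t = 0"
        using vb_power[OF e, of "i + j"] unfolding vb_def by simp
      then show "coeff ((\<lambda>(i,j). cst (hb i * hb j) * e ^ (i + j)) x) t = 0" using xij by simp
    qed
    then show ?thesis by simp
  qed
  finally show "coeff (?Y * ?Y) t = coeff (1 + e) t" .
qed


definition shift :: "rat \<Rightarrow> lc \<Rightarrow> lc" where
  "shift a x = Abs_lc (\<lambda>q. coeff x (q - a))"

lemma lf_shift: "left_finite (\<lambda>q. coeff x (q - a))"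
  unfolding left_finite_def
proof
  fix r
  have "{q. q < r \<and> coeff x (q - a) \<noteq> 0} = (\<lambda>p. p + a) ` {p. p < r - a \<and> coeff x p \<noteq> 0}"
    by (auto simp: image_iff algebra_simps intro!: exI[of _ "_ - a"])
  moreover have "finite {p. p < r - a \<and> coeff x p \<noteq> 0}" using lf_coeff[of x] unfolding left_finite_def by blast
  ultimately show "finite {q. q < r \<and> coeff x (q - a) \<noteq> 0}" by simp
qed

lemma coeff_shift[simp]: "coeff (shift a x) q = coeff x (q - a)"
  unfolding shift_def by (simp add: coeff_Abs lf_shift)

lemma shift_mult: "shift a x * shift b y = shift (a + b) (x * y)"
proof (rule lc_eqI)
  fix q
  have "bij (\<lambda>d::rat. d + a)" by (rule o_bij[of "\<lambda>d. d - a"]) (auto simp: fun_eq_iff)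
  then have "Sum_any (\<lambda>c. coeff x (c - a) * coeff y (q - c - b)) = Sum_any (\<lambda>d. coeff x d * coeff y (q - (a + b) - d))"
    by (rule Sum_any.reindex_cong) (auto simp: fun_eq_iff algebra_simps)
  then show "coeff (shift a x * shift b y) q = coeff (shift (a + b) (x * y)) q"
    by (simp add: coeff_times)
qed

lemma shift_shift: "shift a (shift b x) = shift (a + b) x"
  by (rule lc_eqI) (simp add: algebra_simps)
lemma shift_0[simp]: "shift 0 x = x"
  by (rule lc_eqI) simp

lemma real_iff: "lc_real x \<longleftrightarrow> lc_cnj x = x"
proof
  assume "lc_real x"
  then show "lc_cnj x = x" unfolding lc_real_def by (intro lc_eqI) (simp add: complex_eq_iff)
next
  assume "lc_cnj x = x"
  then have "\<And>q. cnj (coeff x q) = coeff x q" by (metis coeff_cnj)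
  then show "lc_real x" unfolding lc_real_def by (metis Reals_cnj_iff complex_is_Real_iff)
qed

lemma cnj_power: "lc_cnj (x ^ n) = lc_cnj x ^ n"
  by (induction n) (simp_all add: cnj_mult)

lemma cnj_cst: "lc_cnj (cst c) = cst (cnj c)" by (rule lc_eqI) (simp add: coeff_cst)
lemma cnj_shift: "lc_cnj (shift a x) = shift a (lc_cnj x)" by (rule lc_eqI) simp
lemma cnj_diff: "lc_cnj (x - y) = lc_cnj x - lc_cnj y" by (rule lc_eqI) simp

lemma cnj_gchoose: "cnj (a gchoose k) = cnj a gchoose k"
  by (simp add: gbinomial_altdef_of_nat)

lemma hb_real: "cnj (hb j) = hb j"
  unfolding hb_def cnj_gchoose by simp

lemma ser_real: assumes m: "m > 0" and er: "lc_cnj e = e" and fr: "\<And>j. cnj (f j) = f j"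
  shows "lc_cnj (ser f e m) = ser f e m"
proof (rule lc_eqI)
  fix q
  have "\<And>j. cnj (coeff (e ^ j) q) = coeff (e ^ j) q"
    by (metis coeff_cnj cnj_power er)
  then show "coeff (lc_cnj (ser f e m)) q = coeff (ser f e m) q"
    using m fr by (simp add: coeff_ser)
qed

lemma lead_unique: "coeff x a \<noteq> 0 \<Longrightarrow> vb x a \<Longrightarrow> coeff x b \<noteq> 0 \<Longrightarrow> vb x b \<Longrightarrow> a = b"
  unfolding vb_def by (meson linorder_neqE)

lemma nonneg_vb: "lc_nonneg x \<longleftrightarrow> lc_real x \<and> (x = 0 \<or> (\<exists>q. coeff x q \<noteq> 0 \<and> vb x q \<and> Re (coeff x q) > 0))"
  unfolding lc_nonneg_def vb_def by simp

lemma gap_exists: "\<exists>m>0. \<forall>s. 0 < s \<and> s < m \<longrightarrow> coeff x s = 0"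
proof -
  let ?F = "{s. s < 1 \<and> coeff x s \<noteq> 0 \<and> 0 < s}"
  have fin: "finite ?F" using lf_coeff[of x] unfolding left_finite_def by (rule allE[of _ 1]) (auto elim: finite_subset[rotated])
  show ?thesis
  proof (cases "?F = {}")
    case True
    then show ?thesis by (intro exI[of _ 1]) auto
  next
    case False
    have "Min ?F \<in> ?F" using fin False by (rule Min_in)
    then have pos: "Min ?F > 0" by simp
    show ?thesis
    proof (intro exI[of _ "Min ?F"] conjI allI impI)
      show "Min ?F > 0" by (rule pos)
      fix s assume s: "0 < s \<and> s < Min ?F"
      show "coeff x s = 0"
      proof (rule ccontr)
        assume "coeff x s \<noteq> 0"
        moreover have "Min ?F < 1" using \<open>Min ?F \<in> ?F\<close> by simp
        ultimately have "s \<in> ?F" using s by auto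
        then have "Min ?F \<le> s" by (rule Min_le[OF fin])
        then show False using s by simp
      qed
    qed
  qed
qed

lemma sqrt_exists:
  assumes nn: "lc_nonneg x"
  shows "\<exists>y. lc_nonneg y \<and> y * y = x"
proof (cases "x = 0")
  case True
  then show ?thesis by (intro exI[of _ 0]) (simp add: lc_nonneg_def lc_real_def)
next
  case False
  then obtain q0 where q0: "coeff x q0 \<noteq> 0" "vb x q0" "Re (coeff x q0) > 0" and xr: "lc_cnj x = x"
    using nn unfolding nonneg_vb real_iff by blast
  define c where "c = coeff x q0"
  have cr: "cnj c = c" unfolding c_def by (metis coeff_cnj xr)
  then have imc: "Im c = 0" by (metis Reals_cnj_iff complex_is_Real_iff)
  have c0: "c \<noteq> 0" using q0 c_def by simp
  define x' where "x' = shift (- q0) x"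
  have x'0: "coeff x' 0 = c" unfolding x'_def c_def by simp
  have vbx': "vb x' 0" using q0(2) unfolding x'_def vb_def by simp
  obtain m where m: "m > 0" and gap: "\<forall>s. 0 < s \<and> s < m \<longrightarrow> coeff x' s = 0"
    using gap_exists by blast
  define e where "e = cst (1 / c) * x' - 1"
  have ve: "vb e m" unfolding vb_def
  proof (intro allI impI)
    fix s assume "s < m"
    consider "s < 0" | "s = 0" | "0 < s" by linarith
    then show "coeff e s = 0"
    proof cases
      case 1 then show ?thesis using vbx' unfolding e_def vb_def by (simp add: coeff_one)
    next
      case 2 then show ?thesis using c0 x'0 unfolding e_def by (simp add: coeff_one)
    next
      case 3 then show ?thesis using gap \<open>s < m\<close> unfolding e_def by (simp add: coeff_one)
    qed
  qed
  have er: "lc_cnj e = e"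
    unfolding e_def x'_def by (simp add: cnj_diff cnj_mult cnj_cst cnj_shift xr cr)
  define Y where "Y = ser hb e m"
  have YY: "Y * Y = 1 + e" unfolding Y_def by (rule ser_sqrt[OF m ve])
  have Yr: "lc_cnj Y = Y" unfolding Y_def by (rule ser_real[OF m er hb_real])
  have vY: "vb Y 0" unfolding Y_def by (rule vb_ser[OF m ve])
  have Y0: "coeff Y 0 = 1"
  proof -
    have "coeff Y 0 = coeff (P hb e 1) 0" unfolding Y_def by (rule ser_agree[OF m ve]) (simp add: Nt_def)
    also have "\<dots> = 1"
      using ve m unfolding vb_def by (simp add: coeff_P hb_def coeff_one)
    finally show ?thesis .
  qed
  define s where "s = csqrt c"
  have s2: "s * s = c" unfolding s_def by (metis power2_csqrt power2_eq_square)
  have sre: "s = complex_of_real (sqrt (Re c))" unfolding s_def using imc q0(3) c_def by simp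
  define y where "y = shift (q0 / 2) (cst s * Y)"
  have "y * y = shift (q0 / 2 + q0 / 2) ((cst s * Y) * (cst s * Y))" unfolding y_def by (rule shift_mult)
  also have "(cst s * Y) * (cst s * Y) = cst (s * s) * (Y * Y)" by (simp add: cst_mult algebra_simps)
  also have "cst (s * s) * (Y * Y) = cst c * (cst (1/c) * x')" by (simp add: s2 YY e_def)
  also have "\<dots> = cst (c * (1/c)) * x'" by (simp only: cst_mult mult.assoc)
  also have "\<dots> = x'" using c0 by simp
  also have "shift (q0 / 2 + q0 / 2) x' = x" unfolding x'_def by (simp add: shift_shift)
  finally have yy: "y * y = x" .
  have "lc_nonneg y" unfolding nonneg_vb real_iff
  proof (intro conjI disjI2 exI)
    show "lc_cnj y = y" unfolding y_def using sre Yr by (simp add: cnj_shift cnj_mult cnj_cst)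
    show "coeff y (q0 / 2) \<noteq> 0" unfolding y_def using Y0 sre q0(3) c_def by simp
    show "vb y (q0 / 2)" unfolding y_def using vY unfolding vb_def by simp
    show "Re (coeff y (q0 / 2)) > 0" unfolding y_def using Y0 sre q0(3) c_def by simp
  qed
  then show ?thesis using yy by blast
qed

lemma sqrt_unique:
  assumes "lc_nonneg y1" "lc_nonneg y2" "y1 * y1 = y2 * y2"
  shows "y1 = y2"
proof -
  have "(y1 - y2) * (y1 + y2) = 0" using assms(3) by (simp add: algebra_simps)
  then have "y1 - y2 = 0 \<or> y1 + y2 = 0" by simp
  then have "y1 = y2 \<or> y1 = - y2" by (metis eq_iff_diff_eq_0 eq_neg_iff_add_eq_0)
  then show ?thesis
  proof
    assume n: "y1 = - y2"
    show ?thesis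
    proof (cases "y2 = 0")
      case True then show ?thesis using n by simp
    next
      case False
      then obtain a where a: "coeff y2 a \<noteq> 0" "vb y2 a" "Re (coeff y2 a) > 0"
        using assms(2) unfolding nonneg_vb by blast
      have "y1 \<noteq> 0" using n False by simp
      then obtain b where b: "coeff y1 b \<noteq> 0" "vb y1 b" "Re (coeff y1 b) > 0"
        using assms(1) unfolding nonneg_vb by blast
      have "coeff y1 a \<noteq> 0" "vb y1 a" using a n unfolding vb_def by auto
      then have "a = b" using b lead_unique by blast
      then show ?thesis using a b n by simp
    qed
  qed
qed

lemma sqrt_props:
  assumes "lc_nonneg x"
  shows "lc_nonneg (lc_sqrt x)" "lc_sqrt x * lc_sqrt x = x"
proof -
  have "\<exists>!y. lc_nonneg y \<and> y * y = x"
    using sqrt_exists[OF assms] sqrt_unique by metis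
  then have "lc_nonneg (lc_sqrt x) \<and> lc_sqrt x * lc_sqrt x = x"
    unfolding lc_sqrt_def by (rule theI')
  then show "lc_nonneg (lc_sqrt x)" "lc_sqrt x * lc_sqrt x = x" by auto
qed

lemma nonneg_zcnj: "lc_nonneg (z * lc_cnj z)"
  unfolding nonneg_vb real_iff
proof (intro conjI)
  show "lc_cnj (z * lc_cnj z) = z * lc_cnj z" by (simp add: cnj_mult mult.commute)
  show "z * lc_cnj z = 0 \<or> (\<exists>q. coeff (z * lc_cnj z) q \<noteq> 0 \<and> vb (z * lc_cnj z) q \<and> 0 < Re (coeff (z * lc_cnj z) q))"
  proof (cases "z = 0")
    case True then show ?thesis by simp
  next
    case False
    then obtain l where l: "coeff z l \<noteq> 0" "vb z l" using lead_exists by blast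
    have v: "vb (lc_cnj z) l" using l(2) by (rule vb_cnj)
    have c: "coeff (z * lc_cnj z) (l + l) = coeff z l * cnj (coeff z l)"
      using coeff_mult_lead[OF l(2) v] by simp
    have "Re (coeff z l * cnj (coeff z l)) > 0"
      using l(1) unfolding complex_mult_cnj by (simp add: complex_eq_iff sum_power2_gt_zero_iff)
    then show ?thesis using c vb_mult[OF l(2) v] by (intro disjI2 exI[of _ "l + l"]) auto
  qed
qed

lemma nonneg_add:
  assumes x: "lc_nonneg x" and y: "lc_nonneg y" shows "lc_nonneg (x + y)"
proof (cases "x = 0 \<or> y = 0")
  case True then show ?thesis using x y by auto
next
  case False
  then obtain a where a: "coeff x a \<noteq> 0" "vb x a" "Re (coeff x a) > 0" and xr: "lc_cnj x = x"
    using x unfolding nonneg_vb real_iff by blast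
  obtain b where b: "coeff y b \<noteq> 0" "vb y b" "Re (coeff y b) > 0" and yr: "lc_cnj y = y"
    using y False unfolding nonneg_vb real_iff by blast
  have r: "lc_cnj (x + y) = x + y" using xr yr by (simp add: cnj_add)
  have "\<exists>q. coeff (x + y) q \<noteq> 0 \<and> vb (x + y) q \<and> Re (coeff (x + y) q) > 0"
  proof (cases a b rule: linorder_cases)
    case less
    then have "coeff y a = 0" using b(2) unfolding vb_def by simp
    moreover have "vb y a" by (rule vb_mono[OF b(2)]) (use less in simp)
    ultimately show ?thesis using a by (intro exI[of _ a]) (auto simp: vb_add)
  next
    case equal
    have re: "Re (coeff (x + y) a) > 0" using a b equal by simp
    then have "coeff (x + y) a \<noteq> 0" by (metis zero_complex.sel(1) less_irrefl)
    then show ?thesis using re a b equal by (intro exI[of _ a]) (auto simp: vb_add)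
  next
    case greater
    then have "coeff x b = 0" using a(2) unfolding vb_def by simp
    moreover have "vb x b" by (rule vb_mono[OF a(2)]) (use greater in simp)
    ultimately show ?thesis using b by (intro exI[of _ b]) (auto simp: vb_add)
  qed
  then show ?thesis using r unfolding nonneg_vb real_iff by blast
qed

lemma nonneg_zero: "lc_nonneg 0" by (simp add: lc_nonneg_def lc_real_def)

lemma nonneg_sum: "(\<And>i. i \<in> I \<Longrightarrow> lc_nonneg (f i)) \<Longrightarrow> lc_nonneg (\<Sum>i\<in>I. f i)"
  by (induction I rule: infinite_finite_induct) (auto simp: nonneg_zero nonneg_add)

lemma abs_sq: "lc_abs z * lc_abs z = z * lc_cnj z"
  unfolding lc_abs_def by (rule sqrt_props(2)[OF nonneg_zcnj])

lemma norm2_sq: "lc_norm2 n x * lc_norm2 n x = (\<Sum>i<n. x i * lc_cnj (x i))"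
proof -
  have "lc_sum n (\<lambda>i. lc_abs (x i) * lc_abs (x i)) = (\<Sum>i<n. x i * lc_cnj (x i))"
    by (simp add: lc_sum_eq abs_sq)
  moreover have "lc_nonneg (\<Sum>i<n. x i * lc_cnj (x i))" by (rule nonneg_sum) (rule nonneg_zcnj)
  ultimately show ?thesis unfolding lc_norm2_def by (simp add: sqrt_props(2))
qed

lemma norm2_nonneg: "lc_nonneg (lc_norm2 n x)"
proof -
  have "lc_sum n (\<lambda>i. lc_abs (x i) * lc_abs (x i)) = (\<Sum>i<n. x i * lc_cnj (x i))"
    by (simp add: lc_sum_eq abs_sq)
  moreover have "lc_nonneg (\<Sum>i<n. x i * lc_cnj (x i))" by (rule nonneg_sum) (rule nonneg_zcnj)
  ultimately show ?thesis unfolding lc_norm2_def by (simp add: sqrt_props(1))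
qed

lemma inverse_eq: fixes x y :: lc assumes "x * y = 1" shows "inverse x = y"
proof -
  have x0: "x \<noteq> 0" using assms by auto
  have "\<exists>!y. x * y = 1"
  proof (rule ex1I[of _ y])
    show "x * y = 1" by (rule assms)
    fix y' assume "x * y' = 1"
    then have "y' = y' * (x * y)" using assms by simp
    also have "\<dots> = (x * y') * y" by (simp add: algebra_simps)
    finally show "y' = y" using \<open>x * y' = 1\<close> by simp
  qed
  moreover have "x * y = 1" by (rule assms)
  ultimately have "(THE y. x * y = 1) = y" by (rule the1_equality)
  then show ?thesis unfolding inverse_lc_def using x0 by simp
qed


definition U :: "(nat \<Rightarrow> lc) \<Rightarrow> rat set" where
  "U s = {q. \<exists>k. coeff (s k) q \<noteq> 0}"

lemma regular_U: "regular s \<longleftrightarrow> lfs (U s)"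
  unfolding regular_def lfs_def U_def by (simp add: conj_commute)

definition cconv :: "(nat \<Rightarrow> lc) \<Rightarrow> lc \<Rightarrow> bool" where
  "cconv s l \<longleftrightarrow> (\<forall>q. (\<lambda>k. coeff (s k) q) \<longlonglongrightarrow> coeff l q)"

lemma regular_const: "regular (\<lambda>k. c)"
  unfolding regular_U U_def using lfs_supp[of c] unfolding supp_def by simp

lemma regular_sub: "regular s \<Longrightarrow> (\<And>k q. coeff (t k) q \<noteq> 0 \<Longrightarrow> q \<in> U s) \<Longrightarrow> regular t"
  unfolding regular_U by (rule lfs_subset) (auto simp: U_def)

lemma regular_add: "regular a \<Longrightarrow> regular b \<Longrightarrow> regular (\<lambda>k. a k + b k)"
  unfolding regular_U
  by (rule lfs_subset[OF lfs_Un[of "U a" "U b"]]) (auto simp: U_def)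

lemma regular_diff: "regular a \<Longrightarrow> regular b \<Longrightarrow> regular (\<lambda>k. a k - b k)"
  unfolding regular_U
  by (rule lfs_subset[OF lfs_Un[of "U a" "U b"]]) (auto simp: U_def)

lemma regular_cnj: "regular a \<Longrightarrow> regular (\<lambda>k. lc_cnj (a k))"
  unfolding regular_U U_def by simp

lemma regular_sum: "finite I \<Longrightarrow> (\<And>i. i \<in> I \<Longrightarrow> regular (\<lambda>k. f i k)) \<Longrightarrow> regular (\<lambda>k. \<Sum>i\<in>I. f i k)"
proof (induction I rule: finite_induct)
  case empty
  then show ?case using regular_const[of 0] by simp
next
  case (insert i I)
  then show ?case by (simp add: regular_add)
qed

lemma regular_mult: assumes a: "regular a" and b: "regular b" shows "regular (\<lambda>k. a k * b k)"
  unfolding regular_U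
proof (rule lfs_subset)
  show "lfs (sumset (U a) (U b))" using a b unfolding regular_U by (rule lfs_sumset)
  show "U (\<lambda>k. a k * b k) \<subseteq> sumset (U a) (U b)"
  proof
    fix q assume "q \<in> U (\<lambda>k. a k * b k)"
    then obtain k where k: "coeff (a k * b k) q \<noteq> 0" unfolding U_def by auto
    have "\<exists>p. coeff (a k) p * coeff (b k) (q - p) \<noteq> 0"
    proof (rule ccontr)
      assume "\<not> ?thesis"
      then have "(\<lambda>p. coeff (a k) p * coeff (b k) (q - p)) = (\<lambda>_. 0)" by auto
      then have "coeff (a k * b k) q = 0" unfolding coeff_times by (metis Sum_any.neutral)
      then show False using k by simp
    qed
    then obtain p where "coeff (a k) p \<noteq> 0" "coeff (b k) (q - p) \<noteq> 0" by auto
    moreover have "q = p + (q - p)" by simp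
    ultimately show "q \<in> sumset (U a) (U b)" unfolding sumset_def U_def by blast
  qed
qed

lemma regular_power: "regular e \<Longrightarrow> regular (\<lambda>k. e k ^ j)"
proof (induction j)
  case 0 then show ?case using regular_const[of 1] by simp
next
  case (Suc j) then show ?case using regular_mult[of e "\<lambda>k. e k ^ j"] by simp
qed

lemma cconv_const: "cconv (\<lambda>k. c) c" unfolding cconv_def by simp
lemma cconv_add: "cconv a \<alpha> \<Longrightarrow> cconv b \<beta> \<Longrightarrow> cconv (\<lambda>k. a k + b k) (\<alpha> + \<beta>)"
  unfolding cconv_def by (simp add: tendsto_add)
lemma cconv_diff: "cconv a \<alpha> \<Longrightarrow> cconv b \<beta> \<Longrightarrow> cconv (\<lambda>k. a k - b k) (\<alpha> - \<beta>)"
  unfolding cconv_def by (simp add: tendsto_diff)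
lemma cconv_cnj: "cconv a \<alpha> \<Longrightarrow> cconv (\<lambda>k. lc_cnj (a k)) (lc_cnj \<alpha>)"
  unfolding cconv_def by (simp add: tendsto_cnj)
lemma cconv_sum: "(\<And>i. i \<in> I \<Longrightarrow> cconv (\<lambda>k. f i k) (g i)) \<Longrightarrow> cconv (\<lambda>k. \<Sum>i\<in>I. f i k) (\<Sum>i\<in>I. g i)"
  unfolding cconv_def coeff_sum by (simp add: tendsto_sum)

lemma coeff_mult_fin:
  assumes F: "finite F" and sx: "\<And>p. coeff x p \<noteq> 0 \<Longrightarrow> coeff y (q - p) \<noteq> 0 \<Longrightarrow> p \<in> F"
  shows "coeff (x * y) q = (\<Sum>p\<in>F. coeff x p * coeff y (q - p))"
  unfolding coeff_times by (rule Sum_any.expand_superset[OF F]) (use sx in auto)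

lemma cconv_mult:
  assumes a: "regular a" and b: "regular b" and ca: "cconv a \<alpha>" and cb: "cconv b \<beta>"
  shows "cconv (\<lambda>k. a k * b k) (\<alpha> * \<beta>)"
  unfolding cconv_def
proof
  fix q
  have SA: "lfs (U a \<union> supp \<alpha>)" using a lfs_supp unfolding regular_U by (rule lfs_Un)
  have "lfs (U b \<union> supp \<beta>)" using b lfs_supp unfolding regular_U by (rule lfs_Un)
  then obtain bB where bB: "\<forall>p\<in>U b \<union> supp \<beta>. bB \<le> p" using lfs_bdd by blast
  define F where "F = {p \<in> U a \<union> supp \<alpha>. p < q - bB + 1}"
  have F: "finite F" using SA unfolding F_def lfs_def by blast
  have ek: "coeff (a k * b k) q = (\<Sum>p\<in>F. coeff (a k) p * coeff (b k) (q - p))" for k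
  proof (rule coeff_mult_fin[OF F])
    fix p assume "coeff (a k) p \<noteq> 0" "coeff (b k) (q - p) \<noteq> 0"
    moreover have "bB \<le> q - p" using bB calculation(2) unfolding U_def by auto
    ultimately show "p \<in> F" unfolding F_def U_def by auto
  qed
  have el: "coeff (\<alpha> * \<beta>) q = (\<Sum>p\<in>F. coeff \<alpha> p * coeff \<beta> (q - p))"
  proof (rule coeff_mult_fin[OF F])
    fix p assume "coeff \<alpha> p \<noteq> 0" "coeff \<beta> (q - p) \<noteq> 0"
    moreover have "bB \<le> q - p" using bB calculation(2) unfolding supp_def by auto
    ultimately show "p \<in> F" unfolding F_def supp_def by auto
  qed
  have "(\<lambda>k. \<Sum>p\<in>F. coeff (a k) p * coeff (b k) (q - p)) \<longlonglongrightarrow> (\<Sum>p\<in>F. coeff \<alpha> p * coeff \<beta> (q - p))"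
    using ca cb unfolding cconv_def by (intro tendsto_sum tendsto_mult) auto
  then show "(\<lambda>k. coeff (a k * b k) q) \<longlonglongrightarrow> coeff (\<alpha> * \<beta>) q" unfolding ek el .
qed

lemma cconv_power: "regular e \<Longrightarrow> cconv e \<epsilon> \<Longrightarrow> cconv (\<lambda>k. e k ^ j) (\<epsilon> ^ j)"
proof (induction j)
  case 0 then show ?case using cconv_const[of 1] by simp
next
  case (Suc j)
  then show ?case using cconv_mult[OF Suc.prems(1) regular_power[OF Suc.prems(1)] Suc.prems(2) Suc.IH[OF Suc.prems]]
    by simp
qed


lemma rat_bound: "of_rat q \<le> (R::real) \<Longrightarrow> q < of_int (\<lceil>R\<rceil> + 1)"
proof -
  assume "of_rat q \<le> R"
  also have "R < of_int (\<lceil>R\<rceil> + 1)" by linarith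
  finally have "(of_rat q :: real) < of_rat (of_int (\<lceil>R\<rceil> + 1))" by (simp add: of_rat_add)
  then show ?thesis by (simp only: of_rat_less)
qed

lemma snorm_set_finite: "finite {cmod (coeff x q) | q. of_rat q \<le> (R::real)}"
proof -
  let ?r = "of_int (\<lceil>R\<rceil> + 1) :: rat"
  have "{cmod (coeff x q) | q. of_rat q \<le> R} \<subseteq> insert 0 ((\<lambda>q. cmod (coeff x q)) ` {q. q < ?r \<and> coeff x q \<noteq> 0})"
    using rat_bound by fastforce
  moreover have "finite {q. q < ?r \<and> coeff x q \<noteq> 0}" using lf_coeff[of x] unfolding left_finite_def by blast
  ultimately show ?thesis by (meson finite_imageI finite_insert finite_subset)
qed

lemma coeff_le_snorm: "of_rat q \<le> R \<Longrightarrow> cmod (coeff x q) \<le> lc_snorm R x"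
  unfolding lc_snorm_def
  by (rule cSup_upper) (auto intro!: bdd_above_finite snorm_set_finite)

lemma snorm_le: assumes "\<And>q. of_rat q \<le> R \<Longrightarrow> cmod (coeff x q) \<le> B" shows "lc_snorm R x \<le> B"
  unfolding lc_snorm_def
proof (rule cSup_least)
  have "of_rat (of_int \<lfloor>R\<rfloor>) \<le> R" by simp
  then show "{cmod (coeff x q) | q. of_rat q \<le> R} \<noteq> {}" by blast
  show "\<And>y. y \<in> {cmod (coeff x q) | q. of_rat q \<le> R} \<Longrightarrow> y \<le> B" using assms by blast
qed

lemma weak_cconv: assumes "weak_conv s l" shows "cconv s l"
  unfolding cconv_def
proof
  fix q
  show "(\<lambda>k. coeff (s k) q) \<longlonglongrightarrow> coeff l q"
  proof (rule LIMSEQ_I)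
    fix \<epsilon> :: real assume \<epsilon>: "\<epsilon> > 0"
    define r where "r = min \<epsilon> (1 / (\<bar>of_rat q\<bar> + 1))"
    have pos: "0 < \<bar>of_rat q\<bar> + (1::real)" using abs_ge_zero[of "of_rat q::real"] by linarith
    then have r: "r > 0" unfolding r_def using \<epsilon> by simp
    have "1 / r \<ge> \<bar>of_rat q\<bar> + 1"
    proof -
      have "r \<le> 1 / (\<bar>of_rat q\<bar> + 1)" unfolding r_def by simp
      then have "r * (\<bar>of_rat q\<bar> + 1) \<le> 1" using pos by (simp add: le_divide_eq)
      then show ?thesis using r by (simp add: field_simps)
    qed
    then have qr: "of_rat q \<le> 1 / r" by linarith
    obtain N0 where N0: "\<forall>k>N0. lc_snorm (1 / r) (s k - l) < r" using assms r unfolding weak_conv_def by blast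
    show "\<exists>no. \<forall>n\<ge>no. norm (coeff (s n) q - coeff l q) < \<epsilon>"
    proof (intro exI allI impI)
      fix n assume "n \<ge> Suc N0"
      then have "lc_snorm (1 / r) (s n - l) < r" using N0 by auto
      moreover have "cmod (coeff (s n - l) q) \<le> lc_snorm (1 / r) (s n - l)" by (rule coeff_le_snorm[OF qr])
      ultimately show "norm (coeff (s n) q - coeff l q) < \<epsilon>" using r_def by simp
    qed
  qed
qed

lemma cconv_weak: assumes reg: "regular s" and c: "cconv s l" shows "weak_conv s l"
  unfolding weak_conv_def
proof (intro allI impI)
  fix r :: real assume r: "r > 0"
  define R where "R = 1 / r"
  let ?r = "of_int (\<lceil>R\<rceil> + 1) :: rat"
  define F where "F = {q \<in> U s \<union> supp l. q < ?r}"
  have F: "finite F" using lfs_Un[OF reg[unfolded regular_U] lfs_supp[of l]] unfolding F_def lfs_def by blast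
  have "\<forall>\<^sub>F k in sequentially. \<forall>q\<in>F. cmod (coeff (s k) q - coeff l q) < r / 2"
  proof (rule eventually_ball_finite[OF F], rule ballI)
    fix q
    have lim: "(\<lambda>k. coeff (s k) q) \<longlonglongrightarrow> coeff l q" using c unfolding cconv_def by blast
    have "r / 2 > 0" using r by simp
    from tendsto_iff[THEN iffD1, OF lim, rule_format, OF this]
    show "\<forall>\<^sub>F k in sequentially. cmod (coeff (s k) q - coeff l q) < r / 2"
      by (simp add: dist_norm)
  qed
  then obtain N where N: "\<forall>k\<ge>N. \<forall>q\<in>F. cmod (coeff (s k) q - coeff l q) < r / 2"
    unfolding eventually_sequentially by blast
  show "\<exists>N0. \<forall>k>N0. lc_snorm (1 / r) (s k - l) < r"
  proof (intro exI allI impI)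
    fix k assume "k > N"
    have "lc_snorm R (s k - l) \<le> r / 2"
    proof (rule snorm_le)
      fix q assume q: "of_rat q \<le> R"
      show "cmod (coeff (s k - l) q) \<le> r / 2"
      proof (cases "q \<in> F")
        case True
        then have "cmod (coeff (s k) q - coeff l q) < r / 2" using N \<open>k > N\<close> by auto
        then show ?thesis by simp
      next
        case False
        have "q < ?r" using rat_bound[OF q] .
        then have "coeff (s k) q = 0" "coeff l q = 0" using False unfolding F_def U_def supp_def by auto
        then show ?thesis using r by simp
      qed
    qed
    then show "lc_snorm (1 / r) (s k - l) < r" using r unfolding R_def by simp
  qed
qed

lemma weak_conv_ev: assumes "\<And>k. k \<ge> N \<Longrightarrow> s k = t k" and "weak_conv t l" shows "weak_conv s l"
  unfolding weak_conv_def
proof (intro allI impI)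
  fix r :: real assume "r > 0"
  then obtain N0 where N0: "\<forall>k>N0. lc_snorm (1 / r) (t k - l) < r" using assms(2) unfolding weak_conv_def by blast
  show "\<exists>N0. \<forall>k>N0. lc_snorm (1 / r) (s k - l) < r"
    by (rule exI[of _ "max N N0"]) (use N0 assms(1) in auto)
qed


lemma gap_set: assumes "lfs T" shows "\<exists>m>0. \<forall>s. 0 < s \<and> s < m \<longrightarrow> s \<notin> T"
proof -
  let ?F = "{s \<in> T. s < 1 \<and> 0 < s}"
  have fin: "finite ?F" using assms unfolding lfs_def by (rule allE[of _ 1]) (auto elim: finite_subset[rotated])
  show ?thesis
  proof (cases "?F = {}")
    case True
    then show ?thesis by (intro exI[of _ 1]) auto
  next
    case False
    have "Min ?F \<in> ?F" using fin False by (rule Min_in)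
    then have pos: "Min ?F > 0" by simp
    show ?thesis
    proof (intro exI[of _ "Min ?F"] conjI allI impI)
      show "Min ?F > 0" by (rule pos)
      fix s assume s: "0 < s \<and> s < Min ?F"
      show "s \<notin> T"
      proof
        assume "s \<in> T"
        moreover have "Min ?F < 1" using \<open>Min ?F \<in> ?F\<close> by simp
        ultimately have "s \<in> ?F" using s by auto
        then have "Min ?F \<le> s" by (rule Min_le[OF fin])
        then show False using s by simp
      qed
    qed
  qed
qed

lemma regular_ser: assumes e: "regular e" and m: "m > 0" shows "regular (\<lambda>k. ser f (e k) m)"
  unfolding regular_def
proof
  fix r
  have "{q. q < r \<and> (\<exists>k. coeff (ser f (e k) m) q \<noteq> 0)} \<subseteq>
        (\<Union>j\<le>Nt m r. {q. q < r \<and> (\<exists>k. coeff (e k ^ j) q \<noteq> 0)})"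
  proof
    fix t assume "t \<in> {q. q < r \<and> (\<exists>k. coeff (ser f (e k) m) q \<noteq> 0)}"
    then obtain k where tr: "t < r" and ne: "(\<Sum>j\<le>Nt m t. f j * coeff (e k ^ j) t) \<noteq> 0"
      using m by (auto simp: coeff_ser)
    from ne obtain j where j: "j \<le> Nt m t" "f j * coeff (e k ^ j) t \<noteq> 0"
      by (rule sum.not_neutral_contains_not_neutral) auto
    have "Nt m t \<le> Nt m r" using Nt_mono[OF m, of t r] tr by simp
    then show "t \<in> (\<Union>j\<le>Nt m r. {q. q < r \<and> (\<exists>k. coeff (e k ^ j) q \<noteq> 0)})" using j tr by auto
  qed
  moreover have "finite (\<Union>j\<le>Nt m r. {q. q < r \<and> (\<exists>k. coeff (e k ^ j) q \<noteq> 0)})"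
    using regular_power[OF e] unfolding regular_def by blast
  ultimately show "finite {q. q < r \<and> (\<exists>k. coeff (ser f (e k) m) q \<noteq> 0)}"
    by (rule finite_subset)
qed

lemma cconv_ser: assumes e: "regular e" and c: "cconv e \<epsilon>" and m: "m > 0"
  shows "cconv (\<lambda>k. ser f (e k) m) (ser f \<epsilon> m)"
  unfolding cconv_def
proof
  fix q
  have "(\<lambda>k. \<Sum>j\<le>Nt m q. f j * coeff (e k ^ j) q) \<longlonglongrightarrow> (\<Sum>j\<le>Nt m q. f j * coeff (\<epsilon> ^ j) q)"
    using cconv_power[OF e c] unfolding cconv_def by (intro tendsto_sum tendsto_mult tendsto_const) auto
  then show "(\<lambda>k. coeff (ser f (e k) m) q) \<longlonglongrightarrow> coeff (ser f \<epsilon> m) q"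
    using m by (simp add: coeff_ser)
qed

lemma regular_cstseq: "regular (\<lambda>k. cst (g k))"
  by (rule regular_sub[OF regular_const[of 1]]) (auto simp: U_def coeff_cst coeff_one split: if_splits)

lemma cconv_cstseq: "(g \<longlonglongrightarrow> c) \<Longrightarrow> cconv (\<lambda>k. cst (g k)) (cst c)"
  unfolding cconv_def by (simp add: coeff_cst)


lemma vb_norm:
  assumes "vb x 0" "coeff x 0 \<noteq> 0" "\<forall>s. 0 < s \<and> s < m \<longrightarrow> coeff x s = 0"
  shows "vb (cst (1 / coeff x 0) * x - 1) m"
  unfolding vb_def
proof (intro allI impI)
  fix s assume "s < m"
  consider "s < 0" | "s = 0" | "0 < s" by linarith
  then show "coeff (cst (1 / coeff x 0) * x - 1) s = 0"
  proof cases
    case 1 then show ?thesis using assms(1) unfolding vb_def by (simp add: coeff_one)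
  next
    case 2 then show ?thesis using assms(2) by (simp add: coeff_one)
  next
    case 3 then show ?thesis using assms(3) \<open>s < m\<close> by (simp add: coeff_one)
  qed
qed

lemma inv_norm:
  assumes m: "m > 0" and a: "vb x 0" "coeff x 0 \<noteq> 0" "\<forall>s. 0 < s \<and> s < m \<longrightarrow> coeff x s = 0"
  shows "x * (cst (1 / coeff x 0) * ser (\<lambda>j. (-1) ^ j) (cst (1 / coeff x 0) * x - 1) m) = 1"
proof -
  let ?c = "coeff x 0"
  let ?e = "cst (1 / ?c) * x - 1"
  have cc: "cst ?c * cst (1 / ?c) = 1" using a(2) by (simp add: cst_mult[symmetric])
  have x: "x = cst ?c * (1 + ?e)"
  proof -
    have "cst ?c * (1 + ?e) = (cst ?c * cst (1 / ?c)) * x" by (simp add: algebra_simps)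
    then show ?thesis using cc by simp
  qed
  have "x * (cst (1 / ?c) * ser (\<lambda>j. (-1) ^ j) ?e m) = (cst ?c * cst (1 / ?c)) * ((1 + ?e) * ser (\<lambda>j. (-1) ^ j) ?e m)"
    by (subst x) (simp add: algebra_simps)
  also have "\<dots> = 1" using cc ser_inv[OF m vb_norm[OF a]] by simp
  finally show ?thesis .
qed

lemma amf_vb: "at_most_finite x \<longleftrightarrow> vb x 0"
  unfolding at_most_finite_def vb_def by simp

theorem mainTheorem10:
  fixes n :: nat and A :: "nat \<Rightarrow> nat \<Rightarrow> lc" and v :: "nat \<Rightarrow> lc" and \<nu> :: lc
    and u :: "nat \<Rightarrow> nat \<Rightarrow> lc"
  assumes diag: "diagonalizable n A"
    and A_fin: "\<forall>i<n. \<forall>j<n. at_most_finite (A i j)"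
    and v_fin: "\<forall>i<n. at_most_finite (v i)"
    and v_nz: "\<exists>i<n. v i \<noteq> 0"
    and eig: "\<forall>i<n. mat_vec n A v i = \<nu> * v i"
    and v_norm: "Re (coeff (lc_norm2 n v) 0) > 0"
    and u_fin: "\<forall>k. \<forall>i<n. at_most_finite (u k i)"
    and u_reg: "\<forall>i<n. regular (\<lambda>k. u k i)"
    and u_conv: "\<forall>i<n. weak_conv (\<lambda>k. u k i) (v i)"
  shows "weak_conv (\<lambda>k. lc_div (quad_form n A (u k)) (lc_norm2 n (u k) * lc_norm2 n (u k))) \<nu>"
proof -
  define S where "S = (\<lambda>k. \<Sum>i<n. u k i * lc_cnj (u k i))"
  define Sv where "Sv = (\<Sum>i<n. v i * lc_cnj (v i))"
  define Q where "Q = (\<lambda>k. \<Sum>i<n. lc_cnj (u k i) * (\<Sum>j<n. A i j * u k j))"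
  define Qv where "Qv = (\<Sum>i<n. lc_cnj (v i) * (\<Sum>j<n. A i j * v j))"
  have quad: "\<And>k. quad_form n A (u k) = Q k" unfolding quad_form_def Q_def mat_vec_def by (simp add: lc_sum_eq)
  have ureg: "\<And>i. i < n \<Longrightarrow> regular (\<lambda>k. u k i)" using u_reg by blast
  have ucc: "\<And>i. i < n \<Longrightarrow> cconv (\<lambda>k. u k i) (v i)" using u_conv weak_cconv by blast
  have Sreg: "regular S" unfolding S_def
    by (rule regular_sum) (auto intro!: regular_mult regular_cnj ureg)
  have Scc: "cconv S Sv" unfolding S_def Sv_def
    by (rule cconv_sum) (auto intro!: cconv_mult regular_cnj ureg ucc cconv_cnj)
  have Qreg: "regular Q" unfolding Q_def
    by (rule regular_sum) (auto intro!: regular_mult regular_cnj ureg regular_sum regular_const)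
  have Areg: "\<And>i j. j < n \<Longrightarrow> regular (\<lambda>k. A i j * u k j)"
    by (rule regular_mult[OF regular_const ureg])
  have Qcc: "cconv Q Qv" unfolding Q_def Qv_def
    by (rule cconv_sum) (auto intro!: Areg cconv_mult regular_cnj ureg ucc cconv_cnj regular_sum regular_const cconv_sum cconv_const)
  have Qv: "Qv = \<nu> * Sv"
  proof -
    have "\<And>i. i < n \<Longrightarrow> (\<Sum>j<n. A i j * v j) = \<nu> * v i" using eig unfolding mat_vec_def lc_sum_eq by simp
    then have "Qv = (\<Sum>i<n. lc_cnj (v i) * (\<nu> * v i))" unfolding Qv_def by (intro sum.cong) auto
    also have "\<dots> = \<nu> * Sv" unfolding Sv_def by (simp add: sum_distrib_left algebra_simps)
    finally show ?thesis .
  qed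
  have vbS: "\<And>k. vb (S k) 0" unfolding S_def
    using u_fin by (intro vb_sum) (metis add_0 amf_vb lessThan_iff vb_cnj vb_mult)
  have vbSv: "vb Sv 0" unfolding Sv_def
    using v_fin by (intro vb_sum) (metis add_0 amf_vb lessThan_iff vb_cnj vb_mult)
  define cv where "cv = coeff Sv 0"
  have cv: "cv \<noteq> 0"
  proof -
    define y where "y = lc_norm2 n v"
    have yy: "y * y = Sv" unfolding y_def Sv_def by (rule norm2_sq)
    have y0: "coeff y 0 \<noteq> 0" using v_norm unfolding y_def by auto
    then have "y \<noteq> 0" by auto
    then obtain l where l: "coeff y l \<noteq> 0" "vb y l" using lead_exists by blast
    have "\<not> l < 0"
    proof
      assume "l < 0"
      have "coeff Sv (l + l) = coeff y l * coeff y l" unfolding yy[symmetric] by (rule coeff_mult_lead[OF l(2) l(2)])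
      moreover have "coeff Sv (l + l) = 0" using vbSv \<open>l < 0\<close> unfolding vb_def by simp
      ultimately show False using l(1) by simp
    qed
    then have vy: "vb y 0" using l(2) by (intro vb_mono[OF l(2)]) simp
    have "coeff Sv (0 + 0) = coeff y 0 * coeff y 0" unfolding yy[symmetric] by (rule coeff_mult_lead[OF vy vy])
    then show ?thesis unfolding cv_def using y0 by simp
  qed
  have lfsT: "lfs (U S \<union> supp Sv)" using lfs_Un[OF Sreg[unfolded regular_U] lfs_supp] .
  obtain m where m: "m > 0" and gap: "\<forall>s. 0 < s \<and> s < m \<longrightarrow> s \<notin> U S \<union> supp Sv"
    using gap_set[OF lfsT] by blast
  have gapS: "\<forall>s. 0 < s \<and> s < m \<longrightarrow> coeff (S k) s = 0" for k using gap unfolding U_def by blast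
  have gapSv: "\<forall>s. 0 < s \<and> s < m \<longrightarrow> coeff Sv s = 0" using gap unfolding supp_def by blast
  define c where "c = (\<lambda>k. coeff (S k) 0)"
  have clim: "c \<longlonglongrightarrow> cv" using Scc unfolding cconv_def c_def cv_def by blast
  define E where "E = (\<lambda>k. cst (1 / c k) * S k - 1)"
  define Ev where "Ev = cst (1 / cv) * Sv - 1"
  have Ereg: "regular E" unfolding E_def
    by (intro regular_diff regular_mult regular_cstseq Sreg regular_const)
  have invlim: "(\<lambda>k. 1 / c k) \<longlonglongrightarrow> 1 / cv" using clim cv by (intro tendsto_divide tendsto_const)
  have Ecc: "cconv E Ev" unfolding E_def Ev_def
    by (intro cconv_diff cconv_mult regular_cstseq Sreg cconv_cstseq invlim Scc cconv_const)
  define G where "G = (\<lambda>k. cst (1 / c k) * ser (\<lambda>j. (-1) ^ j) (E k) m)"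
  define Gv where "Gv = cst (1 / cv) * ser (\<lambda>j. (-1) ^ j) Ev m"
  have Greg: "regular G" unfolding G_def
    by (intro regular_mult regular_cstseq regular_ser Ereg m)
  have Gcc: "cconv G Gv" unfolding G_def Gv_def
    by (intro cconv_mult regular_cstseq regular_ser Ereg m cconv_cstseq invlim cconv_ser Ecc)
  have SvGv: "Sv * Gv = 1" unfolding Gv_def Ev_def cv_def
    by (rule inv_norm[OF m vbSv cv[unfolded cv_def] gapSv])
  have SG: "S k * G k = 1" if "c k \<noteq> 0" for k unfolding G_def E_def c_def
    by (rule inv_norm[OF m vbS that[unfolded c_def] gapS])
  have "cconv (\<lambda>k. Q k * G k) (Qv * Gv)" by (rule cconv_mult[OF Qreg Greg Qcc Gcc])
  moreover have "Qv * Gv = \<nu>" using SvGv unfolding Qv by (simp add: mult.assoc)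
  ultimately have wQG: "weak_conv (\<lambda>k. Q k * G k) \<nu>"
    using cconv_weak[OF regular_mult[OF Qreg Greg]] by simp
  have "\<forall>\<^sub>F k in sequentially. c k \<noteq> 0" by (rule tendsto_imp_eventually_ne[OF clim cv])
  then obtain K where K: "\<And>k. k \<ge> K \<Longrightarrow> c k \<noteq> 0" unfolding eventually_sequentially by blast
  show ?thesis
  proof (rule weak_conv_ev[OF _ wQG])
    fix k assume "k \<ge> K"
    then have "S k * G k = 1" using SG K by blast
    then have "inverse (S k) = G k" by (rule inverse_eq)
    moreover have "lc_norm2 n (u k) * lc_norm2 n (u k) = S k" unfolding S_def by (rule norm2_sq)
    ultimately show "lc_div (quad_form n A (u k)) (lc_norm2 n (u k) * lc_norm2 n (u k)) = Q k * G k"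
      unfolding lc_div_def quad by simp
  qed
qed


end
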